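(* Let $\gamma\geq0$ and $G=(V,E,\omega)\in\mathcal C_\gamma$. Define, for $i,j\in V$, $\tilde\omega_{ij}:=-d_j^r\sum_{m=1}^{n-1}\Lambda_m\phi^m_i\phi^m_j$ if $i\neq j$ and $\tilde\omega_{ii}:=0$. Then $\tilde\omega_{ij}\geq0$ for all $i,j\in V$, and $\omega_{ij}>0$ implies $\tilde\omega_{ij}>0$. If, additionally, $G\in\mathcal C$, then $\tilde\omega_{ij}\geq d_i^{-r}\omega_{ij}$ for all $i,j\in V$.
   Context: $\mathcal{G}$ is the set of finite, simple, connected, undirected, edge-weighted graphs $G=(V,E,\omega)$ with $V=\{1,\dots,n\}$, $n\geq2$, weights $\omega_{ij}=\omega_{ji}>0$ on edges, $0$ otherwise. $d_i=\sum_j\omega_{ij}$. $\mathcal V$: functions $V\to\mathbb R$. Fixed $r\in[0,1]$: $\langle u,v\rangle_{\mathcal V}=\sum_id_i^ru_iv_i$, $(\Delta u)_i=d_i^{-r}\sum_j\omega_{ij}(u_i-u_j)$, $\mathcal M(u)=\sum_id_i^ru_i$, $\mathrm{vol}(V)=\sum_id_i^r$, $\mathcal A(u)=\frac{\mathcal M(u)}{\mathrm{vol}(V)}\chi_V$. $0=\lambda_0<\lambda_1\leq\dots\leq\lambda_{n-1}$: eigenvalues of $\Delta$ with $\langle\cdot,\cdot\rangle_{\mathcal V}$-orthonormal eigenfunctions $\phi^0=\mathrm{vol}(V)^{-1/2}\chi_V,\phi^1,\dots,\phi^{n-1}$; $\Lambda_m=\lambda_m+\gamma/\lambda_m$ for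 $m\geq1$. Equilibrium measure $\nu^S$ ($S\subsetneq V$): unique $\nu\in\mathcal V$ with $(\Delta\nu)_i=1$ on $S$, $\nu=0$ off $S$. $f^j:=\nu^{V\setminus\{j\}}-\mathcal A(\nu^{V\setminus\{j\}})$. $\mathcal C=\{G\in\mathcal G:\forall j\ \forall i\neq j:\ f^j_i\geq0\}$; $\mathcal C^0=\{G\in\mathcal G:\forall j\ \forall i\neq j:\ \omega_{ij}>0\text{ or }f^j_i\geq0\}$; for $\gamma>0$, $\mathcal C_\gamma=\{G\in\mathcal C^0:\forall j\ \forall i\neq j:\ \omega_{ij}=0\text{ or }d_i^{-r}\omega_{ij}+\gamma\frac{d_j^r}{\mathrm{vol}(V)}f^j_i>0\}$; $\mathcal C_0:=\mathcal G$. *)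

theory Defs
  imports Complex_Main
begin

text \<open>A weighted graph on V = {1..n} is given by n and a weight function w.
  Vertex functions are functions nat => real (only values on V matter, except
  where stated).\<close>

definition verts :: "nat \<Rightarrow> nat set" where
  "verts n = {1..n}"

definition wgraph :: "nat \<Rightarrow> (nat \<Rightarrow> nat \<Rightarrow> real) \<Rightarrow> bool" where
  "wgraph n w \<longleftrightarrow> n \<ge> 2
     \<and> (\<forall>i\<in>verts n. \<forall>j\<in>verts n. w i j = w j i \<and> w i j \<ge> 0)
     \<and> (\<forall>i\<in>verts n. w i i = 0)
     \<and> (\<forall>i\<in>verts n. \<forall>j\<in>verts n.
          (i, j) \<in> {(a, b). a \<in> verts n \<and> b \<in> verts n \<and> w a b > 0}\<^sup>*)"

definition deg :: "nat \<Rightarrow> (nat \<Rightarrow> nat \<Rightarrow> real) \<Rightarrow> nat \<Rightarrow> real" where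
  "deg n w i = (\<Sum>j\<in>verts n. w i j)"

definition vinner :: "nat \<Rightarrow> (nat \<Rightarrow> nat \<Rightarrow> real) \<Rightarrow> real \<Rightarrow> (nat \<Rightarrow> real) \<Rightarrow> (nat \<Rightarrow> real) \<Rightarrow> real" where
  "vinner n w r u v = (\<Sum>i\<in>verts n. deg n w i powr r * u i * v i)"

definition glap :: "nat \<Rightarrow> (nat \<Rightarrow> nat \<Rightarrow> real) \<Rightarrow> real \<Rightarrow> (nat \<Rightarrow> real) \<Rightarrow> nat \<Rightarrow> real" where
  "glap n w r u i = deg n w i powr (-r) * (\<Sum>j\<in>verts n. w i j * (u i - u j))"

definition gmass :: "nat \<Rightarrow> (nat \<Rightarrow> nat \<Rightarrow> real) \<Rightarrow> real \<Rightarrow> (nat \<Rightarrow> real) \<Rightarrow> real" where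
  "gmass n w r u = (\<Sum>i\<in>verts n. deg n w i powr r * u i)"

definition gvol :: "nat \<Rightarrow> (nat \<Rightarrow> nat \<Rightarrow> real) \<Rightarrow> real \<Rightarrow> real" where
  "gvol n w r = (\<Sum>i\<in>verts n. deg n w i powr r)"

definition gavg :: "nat \<Rightarrow> (nat \<Rightarrow> nat \<Rightarrow> real) \<Rightarrow> real \<Rightarrow> (nat \<Rightarrow> real) \<Rightarrow> nat \<Rightarrow> real" where
  "gavg n w r u i = (if i \<in> verts n then gmass n w r u / gvol n w r else 0)"

definition eqmeas :: "nat \<Rightarrow> (nat \<Rightarrow> nat \<Rightarrow> real) \<Rightarrow> real \<Rightarrow> nat set \<Rightarrow> nat \<Rightarrow> real" where
  "eqmeas n w r S = (THE \<nu>. (\<forall>i\<in>S. glap n w r \<nu> i = 1) \<and> (\<forall>i. i \<notin> S \<longrightarrow> \<nu> i = 0))"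

definition fj :: "nat \<Rightarrow> (nat \<Rightarrow> nat \<Rightarrow> real) \<Rightarrow> real \<Rightarrow> nat \<Rightarrow> nat \<Rightarrow> real" where
  "fj n w r j = (\<lambda>i. eqmeas n w r (verts n - {j}) i - gavg n w r (eqmeas n w r (verts n - {j})) i)"

definition classC :: "nat \<Rightarrow> (nat \<Rightarrow> nat \<Rightarrow> real) \<Rightarrow> real \<Rightarrow> bool" where
  "classC n w r \<longleftrightarrow> wgraph n w \<and>
     (\<forall>j\<in>verts n. \<forall>i\<in>verts n. i \<noteq> j \<longrightarrow> fj n w r j i \<ge> 0)"

definition classC0 :: "nat \<Rightarrow> (nat \<Rightarrow> nat \<Rightarrow> real) \<Rightarrow> real \<Rightarrow> bool" where
  "classC0 n w r \<longleftrightarrow> wgraph n w \<and>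
     (\<forall>j\<in>verts n. \<forall>i\<in>verts n. i \<noteq> j \<longrightarrow> w i j > 0 \<or> fj n w r j i \<ge> 0)"

definition classCg :: "nat \<Rightarrow> (nat \<Rightarrow> nat \<Rightarrow> real) \<Rightarrow> real \<Rightarrow> real \<Rightarrow> bool" where
  "classCg n w r \<gamma> \<longleftrightarrow>
     (if \<gamma> = 0 then wgraph n w
      else classC0 n w r \<and>
        (\<forall>j\<in>verts n. \<forall>i\<in>verts n. i \<noteq> j \<longrightarrow>
           w i j = 0 \<or> deg n w i powr (-r) * w i j
                        + \<gamma> * deg n w j powr r / gvol n w r * fj n w r j i > 0))"

definition eigbasis :: "nat \<Rightarrow> (nat \<Rightarrow> nat \<Rightarrow> real) \<Rightarrow> real \<Rightarrow> (nat \<Rightarrow> real) \<Rightarrow> (nat \<Rightarrow> nat \<Rightarrow> real) \<Rightarrow> bool" where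
  "eigbasis n w r lam phi \<longleftrightarrow>
     (\<forall>m<n. \<forall>i\<in>verts n. glap n w r (phi m) i = lam m * phi m i)
     \<and> (\<forall>m<n. \<forall>k<n. vinner n w r (phi m) (phi k) = (if m = k then 1 else 0))
     \<and> lam 0 = 0 \<and> 0 < lam 1 \<and> (\<forall>m k. 1 \<le> m \<and> m \<le> k \<and> k < n \<longrightarrow> lam m \<le> lam k)
     \<and> (\<forall>i\<in>verts n. phi 0 i = 1 / sqrt (gvol n w r))"

definition wtilde :: "nat \<Rightarrow> (nat \<Rightarrow> nat \<Rightarrow> real) \<Rightarrow> real \<Rightarrow> real \<Rightarrow> (nat \<Rightarrow> real) \<Rightarrow> (nat \<Rightarrow> nat \<Rightarrow> real) \<Rightarrow> nat \<Rightarrow> nat \<Rightarrow> real" where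
  "wtilde n w r \<gamma> lam phi i j =
     (if i = j then 0
      else - (deg n w j powr r * (\<Sum>m\<in>{1..<n}. (lam m + \<gamma> / lam m) * phi m i * phi m j)))"

end

theory Submission
  imports Defs "Jordan_Normal_Form.Determinant"
begin


lemma sum_shift1: "(\<Sum>a<n. f (Suc a)) = (\<Sum>i\<in>{1..n}. (f i :: real))"
proof -
  have "(\<Sum>i\<in>{1..n}. f i) = sum f {Suc 0..<Suc n}" by (rule sum.cong) auto
  also have "\<dots> = (\<Sum>a\<in>{0..<n}. f (Suc a))" by (rule sum.shift_bounds_Suc_ivl)
  finally show ?thesis by (simp add: lessThan_atLeast0)
qed

lemma completeness:
  fixes D :: "nat \<Rightarrow> real" and phi :: "nat \<Rightarrow> nat \<Rightarrow> real"
  assumes ortho: "\<forall>m<n. \<forall>k<n. (\<Sum>i\<in>{1..n}. D i * phi m i * phi k i) = (if m = k then 1 else 0)"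
    and i: "i \<in> {1..n}" and j: "j \<in> {1..n}"
  shows "(\<Sum>m<n. phi m i * phi m j * D j) = (if i = j then 1 else 0)"
proof -
  define A where "A = mat n n (\<lambda>(m,a). D (Suc a) * phi m (Suc a))"
  define B where "B = mat n n (\<lambda>(a,m). phi m (Suc a))"
  have AC: "A \<in> carrier_mat n n" and BC: "B \<in> carrier_mat n n" by (auto simp: A_def B_def)
  have "A * B = 1\<^sub>m n"
  proof (rule eq_matI)
    fix m k assume m: "m < dim_row (1\<^sub>m n)" and k: "k < dim_col (1\<^sub>m n)"
    have "(A * B) $$ (m,k) = (\<Sum>a<n. D (Suc a) * phi m (Suc a) * phi k (Suc a))"
      using m k by (auto simp: A_def B_def scalar_prod_def lessThan_atLeast0 intro!: sum.cong)
    also have "\<dots> = (if m = k then 1 else 0)" using ortho m k sum_shift1[of "\<lambda>i. D i * phi m i * phi k i" n] by simp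
    finally show "(A * B) $$ (m,k) = 1\<^sub>m n $$ (m,k)" using m k by simp
  qed (auto simp: A_def B_def)
  hence BA: "B * A = 1\<^sub>m n" by (rule mat_mult_left_right_inverse[OF AC BC])
  have "(B * A) $$ (i - 1, j - 1) = (\<Sum>m<n. phi m i * phi m j * D j)"
    using i j by (auto simp: A_def B_def scalar_prod_def lessThan_atLeast0 intro!: sum.cong)
  thus ?thesis using i j by (auto simp: BA split: if_splits)
qed


lemma deg_pos:
  assumes g: "wgraph n w" and i: "i \<in> verts n"
  shows "deg n w i > 0"
proof -
  define R where "R = {(a, b). a \<in> verts n \<and> b \<in> verts n \<and> w a b > 0}"
  have n2: "n \<ge> 2" using g by (simp add: wgraph_def)
  define j where "j = (if i = 1 then 2 else (1::nat))"
  have j: "j \<in> verts n" "j \<noteq> i" using n2 i by (auto simp: j_def verts_def)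
  have "(i, j) \<in> R\<^sup>*" using g i j by (simp add: wgraph_def R_def)
  then obtain k where k: "(i, k) \<in> R"
    using j(2) by (cases rule: converse_rtranclE) auto
  hence "k \<in> verts n" "w i k > 0" by (auto simp: R_def)
  moreover have "\<forall>x\<in>verts n. 0 \<le> w i x" using g i by (simp add: wgraph_def)
  ultimately show ?thesis unfolding deg_def
    by (intro sum_pos2[of _ k]) (auto simp: verts_def)
qed

lemma glap_cong:
  assumes "\<forall>x\<in>verts n. u x = v x" "i \<in> verts n"
  shows "glap n w r u i = glap n w r v i"
  using assms unfolding glap_def by (auto intro!: sum.cong)

lemma glap_affine:
  "glap n w r (\<lambda>x. K * u x + c) i = K * glap n w r u i"
  unfolding glap_def by (simp add: sum_distrib_left algebra_simps)

lemma glap_diff: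
  "glap n w r (\<lambda>x. u x - v x) i = glap n w r u i - glap n w r v i"
proof -
  have "(\<Sum>k\<in>verts n. w i k * ((u i - v i) - (u k - v k))) = (\<Sum>k\<in>verts n. w i k*(u i-u k)) - (\<Sum>k\<in>verts n. w i k*(v i - v k))"
    by (simp add: sum_subtractf[symmetric] algebra_simps)
  thus ?thesis by (simp add: glap_def right_diff_distrib)
qed

lemma glap_sum:
  assumes "finite M"
  shows "glap n w r (\<lambda>x. \<Sum>m\<in>M. c m * u m x) i = (\<Sum>m\<in>M. c m * glap n w r (u m) i)"
proof -
  have "(\<Sum>k\<in>verts n. w i k * ((\<Sum>m\<in>M. c m * u m i) - (\<Sum>m\<in>M. c m * u m k)))
      = (\<Sum>k\<in>verts n. \<Sum>m\<in>M. c m * (w i k * (u m i - u m k)))"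
    by (simp add: sum_subtractf[symmetric] sum_distrib_left algebra_simps)
  also have "\<dots> = (\<Sum>m\<in>M. c m * (\<Sum>k\<in>verts n. w i k * (u m i - u m k)))"
    by (subst sum.swap) (simp add: sum_distrib_left)
  finally show ?thesis unfolding glap_def by (simp add: sum_distrib_left algebra_simps)
qed

lemma uniq:
  assumes g: "wgraph n w" and j: "j \<in> verts n"
    and lap: "\<forall>i\<in>verts n - {j}. glap n w r u i = 0" and uj: "u j = 0"
  shows "\<forall>i\<in>verts n. u i = 0"
proof -
  let ?V = "verts n"
  have fin: "finite ?V" by (simp add: verts_def)
  have sym: "\<forall>i\<in>?V. \<forall>k\<in>?V. w i k = w k i" and nn: "\<forall>i\<in>?V. \<forall>k\<in>?V. w i k \<ge> 0"
    using g by (auto simp: wgraph_def)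
  have row0: "u i * (\<Sum>k\<in>?V. w i k * (u i - u k)) = 0" if i: "i \<in> ?V" for i
  proof (cases "i = j")
    case True thus ?thesis using uj by simp
  next
    case False
    have dp: "deg n w i > 0" using deg_pos[OF g i] .
    have "glap n w r u i = 0" using lap i False by auto
    hence "(\<Sum>k\<in>?V. w i k * (u i - u k)) = 0" using dp unfolding glap_def by simp
    thus ?thesis by simp
  qed
  define S where "S = (\<Sum>i\<in>?V. \<Sum>k\<in>?V. w i k * u i * (u i - u k))"
  have S0: "S = 0" unfolding S_def
    using row0 by (intro sum.neutral) (simp add: sum_distrib_left algebra_simps)
  have "S = (\<Sum>k\<in>?V. \<Sum>i\<in>?V. w i k * u i * (u i - u k))" unfolding S_def by (rule sum.swap)
  also have "\<dots> = (\<Sum>i\<in>?V. \<Sum>k\<in>?V. w i k * u k * (u k - u i))"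
    using sym by (intro sum.cong refl) auto
  finally have S2: "S = \<dots>" .
  have "2 * S = (\<Sum>i\<in>?V. \<Sum>k\<in>?V. w i k * (u i - u k)^2)"
    unfolding mult_2 apply (subst S2) apply (subst S_def)
    by (simp add: sum.distrib[symmetric] power2_eq_square algebra_simps)
  hence E: "(\<Sum>i\<in>?V. \<Sum>k\<in>?V. w i k * (u i - u k)^2) = 0" using S0 by simp
  have tn: "\<forall>i\<in>?V. \<forall>k\<in>?V. w i k * (u i - u k)^2 \<ge> 0" using nn by auto
  have "\<forall>i\<in>?V. (\<Sum>k\<in>?V. w i k * (u i - u k)^2) = 0"
    using E fin tn by (subst (asm) sum_nonneg_eq_0_iff) (auto intro: sum_nonneg)
  hence z: "\<forall>i\<in>?V. \<forall>k\<in>?V. w i k * (u i - u k)^2 = 0"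
    using fin tn by (auto simp: sum_nonneg_eq_0_iff)
  define R where "R = {(a, b). a \<in> ?V \<and> b \<in> ?V \<and> w a b > 0}"
  have edge: "u a = u b" if "(a, b) \<in> R" for a b
  proof -
    have "a \<in> ?V" "b \<in> ?V" "w a b > 0" using that by (auto simp: R_def)
    thus ?thesis using z by fastforce
  qed
  show ?thesis
  proof
    fix i assume i: "i \<in> ?V"
    have "(j, i) \<in> R\<^sup>*" using g i j by (simp add: wgraph_def R_def)
    hence "u i = u j" by (induction rule: rtrancl_induct) (auto dest: edge)
    thus "u i = 0" using uj by simp
  qed
qed


lemma key:
  assumes g: "wgraph n w" and eb: "eigbasis n w r lam phi"
    and i: "i \<in> verts n" and j: "j \<in> verts n" and ij: "i \<noteq> j"
  shows "wtilde n w r \<gamma> lam phi i j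
       = deg n w i powr (-r) * w i j + \<gamma> * deg n w j powr r / gvol n w r * fj n w r j i"
proof -
  let ?V = "verts n"
  define dr where "dr x = deg n w x powr r" for x
  define vol where "vol = gvol n w r"
  have fin: "finite ?V" by (simp add: verts_def)
  have n2: "n \<ge> 2" using g by (simp add: wgraph_def)
  have dpos: "deg n w x > 0" if "x \<in> ?V" for x using deg_pos[OF g that] .
  have drpos: "dr x > 0" if "x \<in> ?V" for x using dpos[OF that] by (simp add: dr_def)
  have volpos: "vol > 0" unfolding vol_def gvol_def
    using drpos i fin by (intro sum_pos) (auto simp: dr_def)
  have eig: "\<forall>m<n. \<forall>x\<in>?V. glap n w r (phi m) x = lam m * phi m x"
    and orth: "\<forall>m<n. \<forall>k<n. vinner n w r (phi m) (phi k) = (if m = k then 1 else 0)"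
    and l0: "lam 0 = 0" and l1: "0 < lam 1"
    and lmono: "\<forall>m k. 1 \<le> m \<and> m \<le> k \<and> k < n \<longrightarrow> lam m \<le> lam k"
    and p0: "\<forall>x\<in>?V. phi 0 x = 1 / sqrt vol"
    using eb by (auto simp: eigbasis_def vol_def)
  have lpos: "lam m > 0" if "m \<in> {1..<n}" for m
    using lmono l1 that by (metis atLeastLessThan_iff less_le_trans order_refl)
  have comp: "(\<Sum>m<n. phi m a * phi m b * dr b) = (if a = b then 1 else 0)"
    if "a \<in> ?V" "b \<in> ?V" for a b
    using completeness[of n dr phi a b] orth that
    by (simp add: vinner_def dr_def verts_def)
  have split0: "(\<Sum>m<n. f m) = f 0 + (\<Sum>m\<in>{1..<n}. f m)" for f :: "nat \<Rightarrow> real"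
    using n2 by (simp add: lessThan_atLeast0 sum.atLeast_Suc_lessThan)
  have I1: "(\<Sum>m\<in>{1..<n}. lam m * phi m i * phi m j) * dr j = - (deg n w i powr (-r) * w i j)"
  proof -
    have "(\<Sum>m\<in>{1..<n}. lam m * phi m i * phi m j) * dr j
        = (\<Sum>m<n. lam m * phi m i * phi m j * dr j)"
      by (simp add: split0 l0 sum_distrib_right)
    also have "\<dots> = (\<Sum>m<n. deg n w i powr (-r) *
                 (\<Sum>k\<in>?V. w i k * (phi m i - phi m k)) * (phi m j * dr j))"
      using eig i by (intro sum.cong refl) (auto simp: glap_def[symmetric])
    also have "\<dots> = deg n w i powr (-r) * (\<Sum>k\<in>?V. w i k *
                 ((\<Sum>m<n. phi m i * phi m j * dr j) - (\<Sum>m<n. phi m k * phi m j * dr j)))"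
      by (simp add: sum_distrib_left sum_distrib_right sum_subtractf[symmetric] algebra_simps
            sum.swap[of _ "{..<n}"])
    also have "\<dots> = deg n w i powr (-r) * (\<Sum>k\<in>?V. - (w i k * (if k = j then 1 else 0)))"
      using comp i j ij by (intro arg_cong[where f="\<lambda>x. _ * x"] sum.cong refl) auto
    also have "\<dots> = - (deg n w i powr (-r) * w i j)"
      using j fin by (simp add: sum_negf if_distrib cong: if_cong)
    finally show ?thesis .
  qed
  define c where "c m = 1 / lam m * (phi m j * dr j)" for m
  define gg where "gg x = (\<Sum>m\<in>{1..<n}. c m * phi m x)" for x
  have lapg: "glap n w r gg x = (if x = j then 1 else 0) - dr j / vol" if x: "x \<in> ?V" for x
  proof -
    have "glap n w r gg x = (\<Sum>m\<in>{1..<n}. c m * glap n w r (phi m) x)"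
      unfolding gg_def by (rule glap_sum) simp
    also have "\<dots> = (\<Sum>m\<in>{1..<n}. phi m x * phi m j * dr j)"
    proof (rule sum.cong[OF refl])
      fix m assume m: "m \<in> {1..<n}"
      hence "lam m > 0" "m < n" using lpos by auto
      thus "c m * glap n w r (phi m) x = phi m x * phi m j * dr j" using eig x by (simp add: c_def)
    qed
    also have "\<dots> = (\<Sum>m<n. phi m x * phi m j * dr j) - phi 0 x * phi 0 j * dr j"
      by (simp add: split0)
    also have "\<dots> = (if x = j then 1 else 0) - dr j / vol"
      using comp[OF x j] p0 x j volpos by (simp add: power2_eq_square real_sqrt_mult[symmetric])
    finally show ?thesis .
  qed
  have massg: "(\<Sum>x\<in>?V. dr x * gg x) = 0"
  proof -
    have z: "(\<Sum>x\<in>?V. dr x * phi m x) = 0" if m: "m \<in> {1..<n}" for m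
    proof -
      have "vinner n w r (phi 0) (phi m) = 0" using orth m by auto
      hence "(\<Sum>x\<in>?V. dr x * (1 / sqrt vol) * phi m x) = 0"
        unfolding vinner_def dr_def using p0 by (simp cong: sum.cong)
      hence "(1 / sqrt vol) * (\<Sum>x\<in>?V. dr x * phi m x) = 0"
        by (simp add: sum_distrib_left algebra_simps)
      thus ?thesis using volpos by simp
    qed
    have "(\<Sum>x\<in>?V. dr x * gg x) = (\<Sum>m\<in>{1..<n}. c m * (\<Sum>x\<in>?V. dr x * phi m x))"
      unfolding gg_def by (simp add: sum_distrib_left sum.swap[of _ ?V] algebra_simps)
    also have "\<dots> = 0" using z by simp
    finally show ?thesis .
  qed
  define K where "K = - vol / dr j"
  define nu where "nu x = (if x \<in> ?V - {j} then K * (gg x - gg j) else 0)" for x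
  have nuV: "nu x = K * gg x + (- K * gg j)" if "x \<in> ?V" for x
    using that by (auto simp: nu_def algebra_simps)
  have Pnu: "(\<forall>x\<in>?V - {j}. glap n w r nu x = 1) \<and> (\<forall>x. x \<notin> ?V - {j} \<longrightarrow> nu x = 0)"
  proof (intro conjI ballI allI impI)
    fix x assume x: "x \<in> ?V - {j}"
    have "glap n w r nu x = glap n w r (\<lambda>y. K * gg y + (- K * gg j)) x"
      using x nuV by (intro glap_cong) auto
    also have "\<dots> = K * glap n w r gg x" by (rule glap_affine)
    also have "\<dots> = 1" using x lapg[of x] drpos[OF j] volpos by (simp add: K_def field_simps)
    finally show "glap n w r nu x = 1" .
  qed (simp add: nu_def)
  have EQ: "eqmeas n w r (?V - {j}) = nu"
    unfolding eqmeas_def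
  proof (rule the_equality)
    show "(\<forall>x\<in>?V - {j}. glap n w r nu x = 1) \<and> (\<forall>x. x \<notin> ?V - {j} \<longrightarrow> nu x = 0)" by (rule Pnu)
  next
    fix mu assume P: "(\<forall>x\<in>?V - {j}. glap n w r mu x = 1) \<and> (\<forall>x. x \<notin> ?V - {j} \<longrightarrow> mu x = 0)"
    have "\<forall>x\<in>?V. mu x - nu x = 0"
    proof (rule uniq[OF g j])
      show "\<forall>x\<in>?V - {j}. glap n w r (\<lambda>y. mu y - nu y) x = 0"
        using P Pnu by (simp add: glap_diff)
      show "mu j - nu j = 0" using P Pnu by simp
    qed
    hence "mu x = nu x" for x using P Pnu by (cases "x \<in> ?V") auto
    thus "mu = nu" by auto
  qed
  have fji: "fj n w r j i = K * gg i"
  proof -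
    have "gmass n w r nu = (\<Sum>x\<in>?V. dr x * (K * gg x + (- K * gg j)))"
      unfolding gmass_def dr_def using nuV by (intro sum.cong refl) auto
    also have "\<dots> = (\<Sum>x\<in>?V. K * (dr x * gg x) - (K * gg j) * dr x)"
      by (intro sum.cong refl) (simp add: algebra_simps)
    also have "\<dots> = K * (\<Sum>x\<in>?V. dr x * gg x) - (K * gg j) * (\<Sum>x\<in>?V. dr x)"
      by (simp add: sum_subtractf sum_distrib_left)
    also have "(\<Sum>x\<in>?V. dr x) = vol" by (simp add: vol_def gvol_def dr_def)
    finally have "gmass n w r nu = - K * gg j * vol" using massg by simp
    thus ?thesis using i nuV[OF i] volpos
      by (simp add: fj_def EQ gavg_def vol_def algebra_simps)
  qed
  have "wtilde n w r \<gamma> lam phi i j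
      = - ((\<Sum>m\<in>{1..<n}. lam m * phi m i * phi m j) * dr j) - \<gamma> * gg i"
    using ij lpos
    by (simp add: wtilde_def dr_def gg_def c_def sum.distrib distrib_right sum_distrib_left
        sum_distrib_right algebra_simps)
  also have "\<dots> = deg n w i powr (-r) * w i j + \<gamma> * dr j / vol * fj n w r j i"
    using I1 fji drpos[OF j] volpos by (simp add: K_def field_simps)
  finally show ?thesis by (simp add: dr_def vol_def)
qed

theorem lemma6p14:
  fixes n :: nat and w :: "nat \<Rightarrow> nat \<Rightarrow> real" and r \<gamma> :: real
    and lam :: "nat \<Rightarrow> real" and phi :: "nat \<Rightarrow> nat \<Rightarrow> real"
  assumes "0 \<le> r" and "r \<le> 1" and "\<gamma> \<ge> 0"
    and "wgraph n w" and "classCg n w r \<gamma>"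
    and "eigbasis n w r lam phi"
  shows "(\<forall>i\<in>verts n. \<forall>j\<in>verts n. wtilde n w r \<gamma> lam phi i j \<ge> 0)
       \<and> (\<forall>i\<in>verts n. \<forall>j\<in>verts n. w i j > 0 \<longrightarrow> wtilde n w r \<gamma> lam phi i j > 0)
       \<and> (classC n w r \<longrightarrow>
           (\<forall>i\<in>verts n. \<forall>j\<in>verts n.
              wtilde n w r \<gamma> lam phi i j \<ge> deg n w i powr (-r) * w i j))"
proof -
  note g = assms(4)
  have P: "wtilde n w r \<gamma> lam phi i j \<ge> 0
       \<and> (w i j > 0 \<longrightarrow> wtilde n w r \<gamma> lam phi i j > 0)
       \<and> (classC n w r \<longrightarrow> wtilde n w r \<gamma> lam phi i j \<ge> deg n w i powr (-r) * w i j)"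
    if i: "i \<in> verts n" and j: "j \<in> verts n" for i j
  proof (cases "i = j")
    case True
    have "w i i = 0" using g i by (simp add: wgraph_def)
    thus ?thesis using True by (simp add: wtilde_def)
  next
    case ij: False
    have K: "wtilde n w r \<gamma> lam phi i j
       = deg n w i powr (-r) * w i j + \<gamma> * deg n w j powr r / gvol n w r * fj n w r j i"
      by (rule key[OF g assms(6) i j ij])
    have wnn: "w i j \<ge> 0" using g i j by (simp add: wgraph_def)
    have dp: "deg n w i powr (-r) > 0" using deg_pos[OF g i] by simp
    have t1: "deg n w i powr (-r) * w i j \<ge> 0" using dp wnn by simp
    have cnn: "\<gamma> * deg n w j powr r / gvol n w r \<ge> 0"
      using assms(3) by (simp add: gvol_def sum_nonneg)
    have pos1: "w i j > 0 \<Longrightarrow> deg n w i powr (-r) * w i j > 0" using dp by simp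
    have third: "classC n w r \<longrightarrow> wtilde n w r \<gamma> lam phi i j \<ge> deg n w i powr (-r) * w i j"
    proof
      assume "classC n w r"
      hence "fj n w r j i \<ge> 0" using i j ij by (simp add: classC_def)
      hence "\<gamma> * deg n w j powr r / gvol n w r * fj n w r j i \<ge> 0"
        by (rule mult_nonneg_nonneg[OF cnn])
      thus "wtilde n w r \<gamma> lam phi i j \<ge> deg n w i powr (-r) * w i j"
        using K by linarith
    qed
    show ?thesis
    proof (cases "\<gamma> = 0")
      case True
      thus ?thesis using K t1 pos1 third by simp
    next
      case False
      have C0: "classC0 n w r" and cond: "w i j = 0 \<or> deg n w i powr (-r) * w i j
                        + \<gamma> * deg n w j powr r / gvol n w r * fj n w r j i > 0"
        using assms(5) False i j ij by (auto simp: classCg_def)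
      show ?thesis
      proof (cases "w i j > 0")
        case True
        thus ?thesis using K cond third by auto
      next
        case False
        hence w0: "w i j = 0" using wnn by simp
        have "\<forall>j\<in>verts n. \<forall>i\<in>verts n. i \<noteq> j \<longrightarrow> w i j > 0 \<or> fj n w r j i \<ge> 0"
          using C0 by (simp add: classC0_def)
        hence "fj n w r j i \<ge> 0" using i j ij w0 by fastforce
        hence "\<gamma> * deg n w j powr r / gvol n w r * fj n w r j i \<ge> 0"
          by (rule mult_nonneg_nonneg[OF cnn])
        thus ?thesis using K w0 third by simp
      qed
    qed
  qed
  show ?thesis using P by blast
qed

end
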